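(* Let $E=\{z_1,\dots,z_n\}\subset\mathbb{R}^2$, $n\ge3$, with $z_i\,\mathcal{I}\,z_j$ for all $i\neq j$. For each of the variants Max-Min, Max-Sum, Max-Sum-Min, Max-Min-Sum and Max-Sum-Neighbor, the $3$-dispersion problem in $E$ is solvable in $O(n)$ time using $O(1)$ additional memory space.
   Context: For $y=(y^1,y^2),z=(z^1,z^2)\in\mathbb{R}^2$ write $y\prec z$ iff $y^1<z^1$ and $y^2>z^2$, and $y\,\mathcal{I}\,z$ iff $y\prec z$ or $z\prec y$. Fix $\alpha>0$ and let $d$ be the Euclidean distance. For $2\le p\le n$, let $D_p$ be the set of $p$-tuples $(w_1,\dots,w_p)\in E^p$ of pairwise distinct points, $\delta_{ij}=d(w_i,w_j)^\alpha$. The $p$-dispersion problems maximize over $D_p$: Max-Min: $\min_{1\le i<j\le p}\delta_{ij}$; Max-Sum: $\sum_{1\le i<j\le p}\delta_{ij}$; Max-Sum-Min: $\sum_{i=1}^p\min_{j\ne i}\delta_{ij}$; Max-Min-Sum: $\min_{1\le i\le p}\sum_{j\ne i}\delta_{ij}$. For Max-Sum-Neighbor, index $E$ as $x_1,\dots,x_n$ with increasing first coordinates and maximize $\sum_{j=1}^{p-1}d(x_{i_j},x_{i_{j+1}})^\alpha$ over $1\le i_1<\dots<i_p\le n$. Complexities are in a model where arithmetic operations, comparisons and evaluation of $d(\cdot,\cdot)^\alpha$ take $O(1)$ time; "additional memory space" excludes the input. *)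

theory Defs
  imports Complex_Main "HOL-Library.Multiset"
begin

type_synonym pt = "real \<times> real"

definition prec :: "pt \<Rightarrow> pt \<Rightarrow> bool" where
  "prec y z \<longleftrightarrow> fst y < fst z \<and> snd y > snd z"

definition incomp :: "pt \<Rightarrow> pt \<Rightarrow> bool" where
  "incomp y z \<longleftrightarrow> prec y z \<or> prec z y"

definition edist :: "pt \<Rightarrow> pt \<Rightarrow> real" where
  "edist y z = sqrt ((fst y - fst z)^2 + (snd y - snd z)^2)"

definition delta :: "real \<Rightarrow> pt \<Rightarrow> pt \<Rightarrow> real" where
  "delta \<alpha> y z = edist y z powr \<alpha>"

datatype variant = MaxMin | MaxSum | MaxSumMin | MaxMinSum | MaxSumNeighbor

fun objective :: "real \<Rightarrow> variant \<Rightarrow> pt list \<Rightarrow> real" where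
  "objective \<alpha> MaxMin ws =
     Min {delta \<alpha> (ws!i) (ws!j) | i j. i < j \<and> j < length ws}"
| "objective \<alpha> MaxSum ws =
     (\<Sum>j<length ws. \<Sum>i<j. delta \<alpha> (ws!i) (ws!j))"
| "objective \<alpha> MaxSumMin ws =
     (\<Sum>i<length ws. Min {delta \<alpha> (ws!i) (ws!j) | j. j < length ws \<and> j \<noteq> i})"
| "objective \<alpha> MaxMinSum ws =
     Min {(\<Sum>j\<in>{j. j < length ws \<and> j \<noteq> i}. delta \<alpha> (ws!i) (ws!j)) | i. i < length ws}"
| "objective \<alpha> MaxSumNeighbor ws =
     (let xs = sort_key fst ws in
      \<Sum>j<length xs - 1. delta \<alpha> (xs!j) (xs!Suc j))"

definition feasible :: "nat \<Rightarrow> pt list \<Rightarrow> pt list \<Rightarrow> bool" where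
  "feasible p E ws \<longleftrightarrow> length ws = p \<and> distinct ws \<and> set ws \<subseteq> set E"

text \<open>Real registers r_i, index (natural number) registers N_i.  The input is the
list E of points (read-only); arithmetic, comparisons and evaluation of
d(.,.)^alpha cost one step each.  A program uses only the finitely many registers
it mentions, hence O(1) additional memory.\<close>

datatype instr =
    RConst nat real
  | RAdd nat nat nat
  | RSub nat nat nat
  | RMul nat nat nat
  | RDiv nat nat nat
  | LoadX1 nat nat
  | LoadX2 nat nat
  | DistPow nat nat nat nat nat
  | NConst nat nat
  | NAdd nat nat nat
  | NSub nat nat nat
  | NLen nat
  | JmpRLe nat nat nat
  | JmpNLe nat nat nat
  | Goto nat
  | Halt

type_synonym state = "nat \<times> (nat \<Rightarrow> real) \<times> (nat \<Rightarrow> nat)"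

definition halted :: "instr list \<Rightarrow> state \<Rightarrow> bool" where
  "halted prog s \<longleftrightarrow> fst s \<ge> length prog \<or> prog ! fst s = Halt"

definition coord :: "(pt \<Rightarrow> real) \<Rightarrow> pt list \<Rightarrow> nat \<Rightarrow> real" where
  "coord f E k = (if k < length E then f (E ! k) else 0)"

fun exec :: "real \<Rightarrow> pt list \<Rightarrow> instr \<Rightarrow> state \<Rightarrow> state" where
  "exec \<alpha> E (RConst i c) (pc, r, m) = (Suc pc, r(i := c), m)"
| "exec \<alpha> E (RAdd i j k) (pc, r, m) = (Suc pc, r(i := r j + r k), m)"
| "exec \<alpha> E (RSub i j k) (pc, r, m) = (Suc pc, r(i := r j - r k), m)"
| "exec \<alpha> E (RMul i j k) (pc, r, m) = (Suc pc, r(i := r j * r k), m)"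
| "exec \<alpha> E (RDiv i j k) (pc, r, m) = (Suc pc, r(i := r j / r k), m)"
| "exec \<alpha> E (LoadX1 i j) (pc, r, m) = (Suc pc, r(i := coord fst E (m j)), m)"
| "exec \<alpha> E (LoadX2 i j) (pc, r, m) = (Suc pc, r(i := coord snd E (m j)), m)"
| "exec \<alpha> E (DistPow i a b c d) (pc, r, m) =
     (Suc pc, r(i := delta \<alpha> (r a, r b) (r c, r d)), m)"
| "exec \<alpha> E (NConst i c) (pc, r, m) = (Suc pc, r, m(i := c))"
| "exec \<alpha> E (NAdd i j k) (pc, r, m) = (Suc pc, r, m(i := m j + m k))"
| "exec \<alpha> E (NSub i j k) (pc, r, m) = (Suc pc, r, m(i := m j - m k))"
| "exec \<alpha> E (NLen i) (pc, r, m) = (Suc pc, r, m(i := length E))"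
| "exec \<alpha> E (JmpRLe j k l) (pc, r, m) = ((if r j \<le> r k then l else Suc pc), r, m)"
| "exec \<alpha> E (JmpNLe j k l) (pc, r, m) = ((if m j \<le> m k then l else Suc pc), r, m)"
| "exec \<alpha> E (Goto l) (pc, r, m) = (l, r, m)"
| "exec \<alpha> E Halt s = s"

definition step :: "real \<Rightarrow> pt list \<Rightarrow> instr list \<Rightarrow> state \<Rightarrow> state" where
  "step \<alpha> E prog s = (if halted prog s then s else exec \<alpha> E (prog ! fst s) s)"

definition init_state :: state where
  "init_state = (0, \<lambda>_. 0, \<lambda>_. 0)"

definition run :: "real \<Rightarrow> pt list \<Rightarrow> instr list \<Rightarrow> nat \<Rightarrow> state" where
  "run \<alpha> E prog k = (step \<alpha> E prog ^^ k) init_state"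

definition out_idx :: "state \<Rightarrow> nat list" where
  "out_idx s = (case s of (_, _, m) \<Rightarrow> [m 0, m 1, m 2])"

definition solves_3disp :: "real \<Rightarrow> variant \<Rightarrow> pt list \<Rightarrow> nat list \<Rightarrow> bool" where
  "solves_3disp \<alpha> v E is \<longleftrightarrow>
     distinct is \<and> (\<forall>i\<in>set is. i < length E) \<and>
     (\<forall>ws. feasible 3 E ws \<longrightarrow> objective \<alpha> v ws \<le> objective \<alpha> v (map ((!) E) is))"

end

theory Submission
  imports Defs
begin

definition w1 :: "variant \<Rightarrow> real" where
  "w1 v = (case v of MaxMin \<Rightarrow> 1 | MaxSumMin \<Rightarrow> 1 | _ \<Rightarrow> 0)"
definition w2 :: "variant \<Rightarrow> real" where
  "w2 v = (case v of MaxMin \<Rightarrow> 0 | _ \<Rightarrow> 1)"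
definition w3 :: "variant \<Rightarrow> real" where
  "w3 v = (case v of MaxSum \<Rightarrow> 1 | _ \<Rightarrow> 0)"

definition prg :: "variant \<Rightarrow> instr list" where
  "prg v = [NConst 5 1, NLen 4, LoadX1 0 0, LoadX1 1 0, NConst 3 1,
   JmpNLe 4 3 15, LoadX1 2 3, JmpRLe 0 2 10, NAdd 0 3 7, RAdd 0 2 20,
   JmpRLe 2 1 13, NAdd 2 3 7, RAdd 1 2 20, NAdd 3 3 5, Goto 5,
   NConst 3 0, RConst 5 (-1), RConst 21 (w1 v), RConst 22 (w2 v),
   LoadX1 6 0, LoadX2 7 0, LoadX1 8 2, LoadX2 9 2,
   JmpNLe 4 3 47, JmpNLe 3 0 26, Goto 27, JmpNLe 0 3 45,
   JmpNLe 3 2 29, Goto 30, JmpNLe 2 3 45,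
   LoadX1 11 3, LoadX2 12 3, DistPow 13 6 7 11 12, DistPow 14 11 12 8 9,
   JmpRLe 13 14 37, RAdd 16 14 20, Goto 38, RAdd 16 13 20,
   RAdd 17 13 14, RMul 18 21 16, RMul 19 22 17, RAdd 15 18 19,
   JmpRLe 15 5 45, RAdd 5 15 20, NAdd 1 3 7, NAdd 3 3 5, Goto 23, Halt]"

lemma prg_len[simp]: "length (prg v) = 48" by (simp add: prg_def)

lemma prg_nth[simp]:
  "prg v ! 0 = NConst 5 1"
  "prg v ! 1 = NLen 4"
  "prg v ! Suc 0 = NLen 4"
  "prg v ! Suc (Suc 0) = LoadX1 0 0"
  "prg v ! Suc (Suc (Suc 0)) = LoadX1 1 0"
  "prg v ! Suc (Suc (Suc (Suc 0))) = NConst 3 1"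
  "prg v ! 2 = LoadX1 0 0"
  "prg v ! 3 = LoadX1 1 0"
  "prg v ! 4 = NConst 3 1"
  "prg v ! 5 = JmpNLe 4 3 15"
  "prg v ! 6 = LoadX1 2 3"
  "prg v ! 7 = JmpRLe 0 2 10"
  "prg v ! 8 = NAdd 0 3 7"
  "prg v ! 9 = RAdd 0 2 20"
  "prg v ! 10 = JmpRLe 2 1 13"
  "prg v ! 11 = NAdd 2 3 7"
  "prg v ! 12 = RAdd 1 2 20"
  "prg v ! 13 = NAdd 3 3 5"
  "prg v ! 14 = Goto 5"
  "prg v ! 15 = NConst 3 0"
  "prg v ! 16 = RConst 5 (-1)"
  "prg v ! 17 = RConst 21 (w1 v)"
  "prg v ! 18 = RConst 22 (w2 v)"
  "prg v ! 19 = LoadX1 6 0"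
  "prg v ! 20 = LoadX2 7 0"
  "prg v ! 21 = LoadX1 8 2"
  "prg v ! 22 = LoadX2 9 2"
  "prg v ! 23 = JmpNLe 4 3 47"
  "prg v ! 24 = JmpNLe 3 0 26"
  "prg v ! 25 = Goto 27"
  "prg v ! 26 = JmpNLe 0 3 45"
  "prg v ! 27 = JmpNLe 3 2 29"
  "prg v ! 28 = Goto 30"
  "prg v ! 29 = JmpNLe 2 3 45"
  "prg v ! 30 = LoadX1 11 3"
  "prg v ! 31 = LoadX2 12 3"
  "prg v ! 32 = DistPow 13 6 7 11 12"
  "prg v ! 33 = DistPow 14 11 12 8 9"
  "prg v ! 34 = JmpRLe 13 14 37"
  "prg v ! 35 = RAdd 16 14 20"
  "prg v ! 36 = Goto 38"
  "prg v ! 37 = RAdd 16 13 20"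
  "prg v ! 38 = RAdd 17 13 14"
  "prg v ! 39 = RMul 18 21 16"
  "prg v ! 40 = RMul 19 22 17"
  "prg v ! 41 = RAdd 15 18 19"
  "prg v ! 42 = JmpRLe 15 5 45"
  "prg v ! 43 = RAdd 5 15 20"
  "prg v ! 44 = NAdd 1 3 7"
  "prg v ! 45 = NAdd 3 3 5"
  "prg v ! 46 = Goto 23"
  "prg v ! 47 = Halt"
  by (simp_all add: prg_def)

definition reaches :: "real \<Rightarrow> pt list \<Rightarrow> variant \<Rightarrow> state \<Rightarrow> nat \<Rightarrow> (state \<Rightarrow> bool) \<Rightarrow> bool" where
  "reaches \<alpha> E v s K Q \<longleftrightarrow> (\<exists>k\<le>K. Q ((step \<alpha> E (prg v) ^^ k) s))"

lemma R_here: "Q s \<Longrightarrow> reaches \<alpha> E v s K Q"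
  unfolding reaches_def by (rule exI[of _ 0]) auto

lemma R_Suc: "\<not> Q s \<Longrightarrow> reaches \<alpha> E v s (Suc K) Q = reaches \<alpha> E v (step \<alpha> E (prg v) s) K Q"
  unfolding reaches_def
proof
  assume "\<not> Q s" "\<exists>k\<le>Suc K. Q ((step \<alpha> E (prg v) ^^ k) s)"
  then obtain k where k: "k \<le> Suc K" "Q ((step \<alpha> E (prg v) ^^ k) s)" by blast
  with \<open>\<not> Q s\<close> obtain k' where "k = Suc k'" by (cases k) auto
  with k show "\<exists>k\<le>K. Q ((step \<alpha> E (prg v) ^^ k) (step \<alpha> E (prg v) s))"
    by (intro exI[of _ k']) (simp add: funpow_swap1)
next
  assume "\<exists>k\<le>K. Q ((step \<alpha> E (prg v) ^^ k) (step \<alpha> E (prg v) s))"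
  then obtain k where "k \<le> K" "Q ((step \<alpha> E (prg v) ^^ k) (step \<alpha> E (prg v) s))" by blast
  then show "\<exists>k\<le>Suc K. Q ((step \<alpha> E (prg v) ^^ k) s)"
    by (intro exI[of _ "Suc k"]) (simp add: funpow_swap1)
qed

lemma R_num: "\<not> Q s \<Longrightarrow> reaches \<alpha> E v s (numeral n) Q = reaches \<alpha> E v (step \<alpha> E (prg v) s) (pred_numeral n) Q"
  by (simp add: numeral_eq_Suc R_Suc)

lemma R_mono: "reaches \<alpha> E v s K Q \<Longrightarrow> K \<le> K' \<Longrightarrow> reaches \<alpha> E v s K' Q"
  unfolding reaches_def by (meson order_trans)

lemma R_conseq: "reaches \<alpha> E v s K P \<Longrightarrow> (\<And>s. P s \<Longrightarrow> Q s) \<Longrightarrow> reaches \<alpha> E v s K Q"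
  unfolding reaches_def by blast

lemma R_trans: "reaches \<alpha> E v s K1 (\<lambda>s'. reaches \<alpha> E v s' K2 Q) \<Longrightarrow> reaches \<alpha> E v s (K1 + K2) Q"
  unfolding reaches_def
proof -
  assume "\<exists>k\<le>K1. \<exists>k'\<le>K2. Q ((step \<alpha> E (prg v) ^^ k') ((step \<alpha> E (prg v) ^^ k) s))"
  then obtain k k' where "k \<le> K1" "k' \<le> K2" "Q ((step \<alpha> E (prg v) ^^ k') ((step \<alpha> E (prg v) ^^ k) s))" by blast
  then show "\<exists>k\<le>K1 + K2. Q ((step \<alpha> E (prg v) ^^ k) s)"
    by (intro exI[of _ "k' + k"]) (simp add: funpow_add)
qed

lemma coord_lt[simp]: "k < length E \<Longrightarrow> coord f E k = f (E ! k)"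
  by (simp add: coord_def)

definition X :: "pt list \<Rightarrow> nat \<Rightarrow> real" where "X E t = fst (E ! t)"

definition Inv1 :: "pt list \<Rightarrow> nat \<Rightarrow> state \<Rightarrow> bool" where
  "Inv1 E i s = (case s of (pc, r, m) \<Rightarrow> pc = 5 \<and> m 3 = i \<and> m 4 = length E \<and> m 5 = 1 \<and> m 7 = 0
     \<and> r 20 = 0 \<and> 1 \<le> i \<and> i \<le> length E \<and> m 0 < i \<and> m 2 < i \<and> r 0 = X E (m 0) \<and> r 1 = X E (m 2)
     \<and> (\<forall>t<i. X E (m 0) \<le> X E t \<and> X E t \<le> X E (m 2)))"

lemmas stepsimps = step_def halted_def

lemma init1: "length E \<ge> 1 \<Longrightarrow> reaches \<alpha> E v init_state 5 (Inv1 E 1)"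
  apply (simp add: init_state_def R_num R_Suc stepsimps Inv1_def)
  apply (rule R_here)
  apply (auto simp add: Inv1_def X_def coord_def)
  done


lemma iter1: "Inv1 E i s \<Longrightarrow> i < length E \<Longrightarrow> reaches \<alpha> E v s 10 (Inv1 E (i+1))"
  apply (cases s)
  apply (clarsimp simp: Inv1_def)
  apply (simp add: R_num R_Suc stepsimps Inv1_def)
  apply (intro conjI impI; rule R_here)
  apply (auto simp: Inv1_def less_Suc_eq X_def)
  done

lemma loop1: "Inv1 E i s \<Longrightarrow> reaches \<alpha> E v s (10 * (length E - i)) (Inv1 E (length E))"
proof (induction "length E - i" arbitrary: i s)
  case 0
  then have "i = length E" by (cases s) (auto simp: Inv1_def)
  with 0 show ?case by (auto intro: R_here)
next
  case (Suc d)
  then have lt: "i < length E" by simp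
  have "reaches \<alpha> E v s (10 + 10 * (length E - (i+1))) (Inv1 E (length E))"
    apply (rule R_trans)
    apply (rule R_conseq[OF iter1[OF Suc.prems lt]])
    apply (rule Suc.hyps)
    using Suc.hyps(2) apply simp
    apply assumption
    done
  moreover have "10 + 10 * (length E - (i+1)) = 10 * (length E - i)" using lt by simp
  ultimately show ?case by simp
qed

definition scr :: "real \<Rightarrow> pt list \<Rightarrow> variant \<Rightarrow> nat \<Rightarrow> nat \<Rightarrow> nat \<Rightarrow> real" where
  "scr \<alpha> E v a b j = w1 v * min (delta \<alpha> (E!a) (E!j)) (delta \<alpha> (E!j) (E!b))
     + w2 v * (delta \<alpha> (E!a) (E!j) + delta \<alpha> (E!j) (E!b))"

lemma delta_nonneg: "0 \<le> delta \<alpha> p q"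
  by (simp add: delta_def)

lemma scr_nonneg: "0 \<le> scr \<alpha> E v a b j"
  unfolding scr_def w1_def w2_def
  by (cases v) (auto intro!: add_nonneg_nonneg delta_nonneg)

definition Inv2 :: "real \<Rightarrow> pt list \<Rightarrow> variant \<Rightarrow> nat \<Rightarrow> state \<Rightarrow> bool" where
  "Inv2 \<alpha> E v i s = (case s of (pc, r, m) \<Rightarrow> pc = 23 \<and> m 3 = i \<and> m 4 = length E \<and> m 5 = 1 \<and> m 7 = 0
     \<and> r 20 = 0 \<and> i \<le> length E \<and> m 0 < length E \<and> m 2 < length E
     \<and> (\<forall>t<length E. X E (m 0) \<le> X E t \<and> X E t \<le> X E (m 2))
     \<and> r 6 = fst (E ! m 0) \<and> r 7 = snd (E ! m 0) \<and> r 8 = fst (E ! m 2) \<and> r 9 = snd (E ! m 2)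
     \<and> r 21 = w1 v \<and> r 22 = w2 v
     \<and> ((r 5 = -1 \<and> (\<forall>j<i. j = m 0 \<or> j = m 2)) \<or>
        (m 1 < i \<and> m 1 \<noteq> m 0 \<and> m 1 \<noteq> m 2 \<and> r 5 = scr \<alpha> E v (m 0) (m 2) (m 1)
          \<and> (\<forall>j<i. j \<noteq> m 0 \<and> j \<noteq> m 2 \<longrightarrow> scr \<alpha> E v (m 0) (m 2) j \<le> r 5))))"

lemma exit1: "Inv1 E (length E) s \<Longrightarrow> reaches \<alpha> E v s 9 (Inv2 \<alpha> E v 0)"
  apply (cases s)
  apply (clarsimp simp: Inv1_def)
  apply (simp add: R_num R_Suc stepsimps Inv2_def)
  apply (rule R_here)
  apply (auto simp: Inv2_def X_def)
  done



definition AT :: "nat \<Rightarrow> (state \<Rightarrow> bool) \<Rightarrow> state \<Rightarrow> bool" where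
  "AT P Q s \<longleftrightarrow> fst s = P \<and> Q s"

lemma R_numAT: "fst s \<noteq> P \<Longrightarrow> reaches \<alpha> E v s (numeral n) (AT P Q) = reaches \<alpha> E v (step \<alpha> E (prg v) s) (pred_numeral n) (AT P Q)"
  by (rule R_num) (simp add: AT_def)
lemma R_SucAT: "fst s \<noteq> P \<Longrightarrow> reaches \<alpha> E v s (Suc n) (AT P Q) = reaches \<alpha> E v (step \<alpha> E (prg v) s) n (AT P Q)"
  by (rule R_Suc) (simp add: AT_def)
lemma R_first: "reaches \<alpha> E v (step \<alpha> E (prg v) s) (K - 1) Q \<Longrightarrow> 0 < K \<Longrightarrow> reaches \<alpha> E v s K Q"
  unfolding reaches_def
proof -
  assume "\<exists>k\<le>K - 1. Q ((step \<alpha> E (prg v) ^^ k) (step \<alpha> E (prg v) s))" "0 < K"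
  then obtain k where "k \<le> K - 1" "Q ((step \<alpha> E (prg v) ^^ k) (step \<alpha> E (prg v) s))" by blast
  with \<open>0 < K\<close> show "\<exists>k\<le>K. Q ((step \<alpha> E (prg v) ^^ k) s)"
    by (intro exI[of _ "Suc k"]) (simp add: funpow_swap1)
qed



definition Seg1Post :: "real \<Rightarrow> pt list \<Rightarrow> (nat \<Rightarrow> real) \<Rightarrow> (nat \<Rightarrow> nat) \<Rightarrow> state \<Rightarrow> bool" where
  "Seg1Post \<alpha> E r m s = (case s of (pc, r', m') \<Rightarrow>
     (let d1 = delta \<alpha> (r 6, r 7) (coord fst E (m 3), coord snd E (m 3));
          d2 = delta \<alpha> (coord fst E (m 3), coord snd E (m 3)) (r 8, r 9) in
     m' = m \<and> (\<forall>k\<in>{5,6,7,8,9,20,21,22}. r' k = r k) \<and> r' 13 = d1 \<and> r' 14 = d2 \<and>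
     r' 16 = min d1 d2 + r 20))"

lemma seg1: "reaches \<alpha> E v (30, r, m) 8 (AT 38 (Seg1Post \<alpha> E r m))"
  apply (simp add: R_numAT R_SucAT stepsimps)
  apply (intro conjI impI; rule R_here)
  apply (auto simp: AT_def Seg1Post_def Let_def min_def)
  done

definition Seg2Post :: "(nat \<Rightarrow> real) \<Rightarrow> (nat \<Rightarrow> nat) \<Rightarrow> state \<Rightarrow> bool" where
  "Seg2Post r m s = (case s of (pc, r', m') \<Rightarrow>
     (let sc = r 21 * r 16 + r 22 * (r 13 + r 14) in
     (\<forall>k\<in>{6,7,8,9,20,21,22}. r' k = r k) \<and> (\<forall>k. k \<noteq> 1 \<and> k \<noteq> 3 \<longrightarrow> m' k = m k) \<and>
     m' 3 = m 3 + m 5 \<and>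
     r' 5 = (if sc \<le> r 5 then r 5 else sc + r 20) \<and> m' 1 = (if sc \<le> r 5 then m 1 else m 3 + m 7)))"

lemma seg2: "reaches \<alpha> E v (38, r, m) 9 (AT 23 (Seg2Post r m))"
  apply (simp add: R_numAT R_SucAT stepsimps)
  apply (intro conjI impI; rule R_here)
  apply (auto simp: AT_def Seg2Post_def Let_def)
  done


lemma iter2:
  assumes I: "Inv2 \<alpha> E v i s" and lt: "i < length E"
  shows "reaches \<alpha> E v s 25 (AT 23 (Inv2 \<alpha> E v (i+1)))"
proof -
  obtain pc r m where s: "s = (pc, r, m)" by (cases s)
  have F: "pc = 23" "m 3 = i" "m 4 = length E" "m 5 = 1" "m 7 = 0" "r 20 = 0" "m 0 < length E"
    "m 2 < length E" "\<forall>t<length E. X E (m 0) \<le> X E t \<and> X E t \<le> X E (m 2)"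
    "r 6 = fst (E ! m 0)" "r 7 = snd (E ! m 0)" "r 8 = fst (E ! m 2)" "r 9 = snd (E ! m 2)"
    "r 21 = w1 v" "r 22 = w2 v"
    using I by (simp_all add: s Inv2_def)
  have D: "(r 5 = -1 \<and> (\<forall>j<i. j = m 0 \<or> j = m 2)) \<or>
        (m 1 < i \<and> m 1 \<noteq> m 0 \<and> m 1 \<noteq> m 2 \<and> r 5 = scr \<alpha> E v (m 0) (m 2) (m 1)
          \<and> (\<forall>j<i. j \<noteq> m 0 \<and> j \<noteq> m 2 \<longrightarrow> scr \<alpha> E v (m 0) (m 2) j \<le> r 5))"
    using I by (simp add: s Inv2_def)
  consider (A) "i = m 0" | (B) "i \<noteq> m 0" "i = m 2" | (C) "i \<noteq> m 0" "i \<noteq> m 2" by blast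
  then show ?thesis
  proof cases
    case A
    have "reaches \<alpha> E v (23, r, m) 5 (AT 23 (Inv2 \<alpha> E v (i+1)))"
      apply (rule R_first)
      using F A lt apply (simp add: R_numAT R_SucAT stepsimps)
      apply (rule R_here)
      using F A D lt apply (auto simp: AT_def Inv2_def less_Suc_eq)
      done
    then show ?thesis unfolding s F(1) by (rule R_mono) simp
  next
    case B
    have "reaches \<alpha> E v (23, r, m) 7 (AT 23 (Inv2 \<alpha> E v (i+1)))"
      apply (rule R_first)
      using F B lt apply (simp add: R_numAT R_SucAT stepsimps)
      apply (rule R_here)
      using F B D lt apply (auto simp: AT_def Inv2_def less_Suc_eq)
      done
    then show ?thesis unfolding s F(1) by (rule R_mono) simp
  next
    case C
    have r1: "reaches \<alpha> E v (23, r, m) 5 (AT 30 (\<lambda>s'. s' = (30, r, m)))"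
      apply (rule R_first)
      using F C lt apply (simp add: R_numAT R_SucAT stepsimps)
      apply (rule R_here)
      apply (auto simp: AT_def)
      done
    have r2: "reaches \<alpha> E v (30, r, m) (8 + 9) (AT 23 (Inv2 \<alpha> E v (i+1)))"
    proof (rule R_trans, rule R_conseq[OF seg1])
      fix s1 assume s1: "AT 38 (Seg1Post \<alpha> E r m) s1"
      then obtain r1 m1 where s1e: "s1 = (38, r1, m1)" by (cases s1) (auto simp: AT_def)
      show "reaches \<alpha> E v s1 9 (AT 23 (Inv2 \<alpha> E v (i + 1)))"
        unfolding s1e
      proof (rule R_conseq[OF seg2])
        fix s2 assume s2: "AT 23 (Seg2Post r1 m1) s2"
        then obtain r2 m2 where s2e: "s2 = (23, r2, m2)" by (cases s2) (auto simp: AT_def)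
        define d1 where "d1 = delta \<alpha> (E ! m 0) (E ! i)"
        define d2 where "d2 = delta \<alpha> (E ! i) (E ! m 2)"
        have P1: "m1 = m" "r1 5 = r 5" "r1 6 = r 6" "r1 7 = r 7" "r1 8 = r 8" "r1 9 = r 9"
          "r1 20 = r 20" "r1 21 = r 21" "r1 22 = r 22" "r1 13 = d1" "r1 14 = d2" "r1 16 = min d1 d2"
          using s1 F lt by (auto simp: AT_def Seg1Post_def s1e Let_def d1_def d2_def)
        have sc: "r1 21 * r1 16 + r1 22 * (r1 13 + r1 14) = scr \<alpha> E v (m 0) (m 2) i"
          using P1 F by (simp add: scr_def d1_def d2_def)
        have P2: "\<forall>k\<in>{6,7,8,9,20,21,22}. r2 k = r k" "\<forall>k. k \<noteq> 1 \<and> k \<noteq> 3 \<longrightarrow> m2 k = m k"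
          "m2 3 = i + 1"
          "r2 5 = (if scr \<alpha> E v (m 0) (m 2) i \<le> r 5 then r 5 else scr \<alpha> E v (m 0) (m 2) i)"
          "m2 1 = (if scr \<alpha> E v (m 0) (m 2) i \<le> r 5 then m 1 else i)"
          using s2 P1 F sc unfolding s2e AT_def Seg2Post_def Let_def
          by (simp_all add: sc)
        have nn: "0 \<le> scr \<alpha> E v (m 0) (m 2) i" by (rule scr_nonneg)
        show "AT 23 (Inv2 \<alpha> E v (i + 1)) s2"
          unfolding s2e AT_def Inv2_def
          using P2 F D C lt nn by (auto simp: less_Suc_eq)
      qed
    qed
    have "reaches \<alpha> E v (23, r, m) (5 + (8 + 9)) (AT 23 (Inv2 \<alpha> E v (i+1)))"
      by (rule R_trans, rule R_conseq[OF r1]) (use r2 in \<open>auto simp: AT_def\<close>)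
    then show ?thesis unfolding s F(1) by (rule R_mono) simp
  qed
qed


lemma Inv2_pc: "Inv2 \<alpha> E v i s \<Longrightarrow> fst s = 23"
  by (cases s) (simp add: Inv2_def)

lemma loop2: "Inv2 \<alpha> E v i s \<Longrightarrow> reaches \<alpha> E v s (25 * (length E - i)) (Inv2 \<alpha> E v (length E))"
proof (induction "length E - i" arbitrary: i s)
  case 0
  then have "i = length E" by (cases s) (auto simp: Inv2_def)
  with 0 show ?case by (auto intro: R_here)
next
  case (Suc d)
  then have lt: "i < length E" by simp
  have "reaches \<alpha> E v s (25 + 25 * (length E - (i+1))) (Inv2 \<alpha> E v (length E))"
    apply (rule R_trans)
    apply (rule R_conseq[OF iter2[OF Suc.prems lt]])
    apply (rule Suc.hyps)
    using Suc.hyps(2) apply simp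
    apply (simp add: AT_def)
    done
  moreover have "25 + 25 * (length E - (i+1)) = 25 * (length E - i)" using lt by simp
  ultimately show ?case by simp
qed

definition Fin :: "real \<Rightarrow> pt list \<Rightarrow> variant \<Rightarrow> state \<Rightarrow> bool" where
  "Fin \<alpha> E v s = (case s of (pc, r, m) \<Rightarrow> pc = 47 \<and> m 0 < length E \<and> m 2 < length E
     \<and> (\<forall>t<length E. X E (m 0) \<le> X E t \<and> X E t \<le> X E (m 2))
     \<and> m 1 < length E \<and> m 1 \<noteq> m 0 \<and> m 1 \<noteq> m 2
     \<and> (\<forall>j<length E. j \<noteq> m 0 \<and> j \<noteq> m 2 \<longrightarrow> scr \<alpha> E v (m 0) (m 2) j \<le> scr \<alpha> E v (m 0) (m 2) (m 1)))"

lemma exit2: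
  assumes I: "Inv2 \<alpha> E v (length E) s" and n3: "3 \<le> length E"
  shows "reaches \<alpha> E v s 1 (Fin \<alpha> E v)"
proof -
  obtain pc r m where s: "s = (pc, r, m)" by (cases s)
  have F: "pc = 23" "m 3 = length E" "m 4 = length E"
    using I by (simp_all add: s Inv2_def)
  have D: "(r 5 = -1 \<and> (\<forall>j<length E. j = m 0 \<or> j = m 2)) \<or>
        (m 1 < length E \<and> m 1 \<noteq> m 0 \<and> m 1 \<noteq> m 2 \<and> r 5 = scr \<alpha> E v (m 0) (m 2) (m 1)
          \<and> (\<forall>j<length E. j \<noteq> m 0 \<and> j \<noteq> m 2 \<longrightarrow> scr \<alpha> E v (m 0) (m 2) j \<le> r 5))"
    using I by (simp add: s Inv2_def)
  have G: "m 0 < length E \<and> m 2 < length E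
     \<and> (\<forall>t<length E. X E (m 0) \<le> X E t \<and> X E t \<le> X E (m 2))"
    using I by (simp add: s Inv2_def)
  have nd: "\<not> (\<forall>j<length E. j = m 0 \<or> j = m 2)"
  proof
    assume a: "\<forall>j<length E. j = m 0 \<or> j = m 2"
    have l: "(0::nat) < length E" "(1::nat) < length E" "(2::nat) < length E" using n3 by auto
    have "(0::nat) = m 0 \<or> 0 = m 2" using a l(1) by blast
    moreover have "(1::nat) = m 0 \<or> 1 = m 2" using a l(2) by blast
    moreover have "(2::nat) = m 0 \<or> 2 = m 2" using a l(3) by blast
    ultimately show False by linarith
  qed
  show ?thesis unfolding s F(1)
    apply (rule R_first)
    using F apply (simp add: stepsimps)
    apply (rule R_here)
    using D G nd apply (auto simp: Fin_def)
    done
qed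

lemma Fin_halted: "Fin \<alpha> E v s \<Longrightarrow> halted (prg v) s"
  by (cases s) (simp add: Fin_def halted_def)

lemma total:
  assumes n3: "3 \<le> length E"
  shows "\<exists>k \<le> 40 * length E. Fin \<alpha> E v (run \<alpha> E (prg v) k)"
proof -
  have "reaches \<alpha> E v init_state (5 + (10 * (length E - 1) + (9 + (25 * (length E - 0) + 1)))) (Fin \<alpha> E v)"
    apply (rule R_trans, rule R_conseq[OF init1])
    using n3 apply simp
    apply (rule R_trans, rule R_conseq[OF loop1], assumption)
    apply (rule R_trans, rule R_conseq[OF exit1], assumption)
    apply (rule R_trans, rule R_conseq[OF loop2], assumption)
    apply (rule exit2, assumption, rule n3)
    done
  then have "reaches \<alpha> E v init_state (40 * length E) (Fin \<alpha> E v)"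
    by (rule R_mono) (use n3 in simp)
  then show ?thesis by (simp add: reaches_def run_def)
qed



lemma delta_sym: "delta \<alpha> p q = delta \<alpha> q p"
  unfolding delta_def edist_def by (simp add: power2_commute)

abbreviation "three \<equiv> Suc (Suc (Suc 0))"

lemma set2: "{f i j | i j. i < j \<and> j < three} = {f 0 (Suc 0), f 0 (Suc (Suc 0)), f (Suc 0) (Suc (Suc 0))}"
  by (auto simp: less_Suc_eq)

lemma setA: "{g j | j. j < three \<and> 0 < j} = {g (Suc 0), g (Suc (Suc 0))}"
  by (auto simp: less_Suc_eq)
lemma setB: "{g j | j. j < three \<and> j \<noteq> Suc 0} = {g 0, g (Suc (Suc 0))}"
  by (auto simp: less_Suc_eq)
lemma setC: "{g j | j. j < three \<and> j \<noteq> Suc (Suc 0)} = {g 0, g (Suc 0)}"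
  by (auto simp: less_Suc_eq)
lemma setA': "{j. j < three \<and> 0 < j} = {Suc 0, Suc (Suc 0)}"
  by (auto simp: less_Suc_eq)
lemma setB': "{j. j < three \<and> j \<noteq> Suc 0} = {0, Suc (Suc 0)}"
  by (auto simp: less_Suc_eq)
lemma setC': "{j. j < three \<and> j \<noteq> Suc (Suc 0)} = {0, Suc 0}"
  by (auto simp: less_Suc_eq)
lemma set0: "{g i | i. i < three} = {g 0, g (Suc 0), g (Suc (Suc 0))}"
  by (auto simp: less_Suc_eq)

lemmas setsimps = set2 setA setB setC setA' setB' setC' set0

lemma obj_MaxMin: "objective \<alpha> MaxMin [x,y,z] = min (delta \<alpha> x y) (min (delta \<alpha> x z) (delta \<alpha> y z))"
  by (simp add: setsimps)

lemma obj_MaxSum: "objective \<alpha> MaxSum [x,y,z] = delta \<alpha> x y + delta \<alpha> x z + delta \<alpha> y z"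
  by (simp add: numeral_3_eq_3 lessThan_Suc)

lemma obj_MaxSumMin: "objective \<alpha> MaxSumMin [x,y,z] =
   min (delta \<alpha> x y) (delta \<alpha> x z) + min (delta \<alpha> y x) (delta \<alpha> y z) + min (delta \<alpha> z x) (delta \<alpha> z y)"
  by (simp add: setsimps lessThan_Suc)

lemma obj_MaxMinSum: "objective \<alpha> MaxMinSum [x,y,z] =
   min (delta \<alpha> x y + delta \<alpha> x z) (min (delta \<alpha> y x + delta \<alpha> y z) (delta \<alpha> z x + delta \<alpha> z y))"
  by (simp add: setsimps)

lemma obj_Nb: "fst x < fst y \<Longrightarrow> fst y < fst z \<Longrightarrow>
   objective \<alpha> MaxSumNeighbor [x,y,z] = delta \<alpha> x y + delta \<alpha> y z"
  by (simp add: lessThan_Suc)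


lemma obj_perm:
  assumes o: "fst p < fst q" "fst q < fst r" and d: "delta \<alpha> p q \<le> delta \<alpha> p r" "delta \<alpha> q r \<le> delta \<alpha> p r"
    and ws: "ws \<in> {[p,q,r],[p,r,q],[q,p,r],[q,r,p],[r,p,q],[r,q,p]}"
  shows "objective \<alpha> V ws = w1 V * min (delta \<alpha> p q) (delta \<alpha> q r) + w2 V * (delta \<alpha> p q + delta \<alpha> q r)
           + w3 V * delta \<alpha> p r"
proof (cases V)
  case MaxMin
  show ?thesis unfolding MaxMin using ws d by (elim insertE emptyE; simp only: obj_MaxMin; auto simp: w1_def w2_def w3_def delta_sym[of \<alpha> q p] delta_sym[of \<alpha> r p] delta_sym[of \<alpha> r q] min_def)
next
  case MaxSum
  show ?thesis unfolding MaxSum using ws d by (elim insertE emptyE; simp only: obj_MaxSum; auto simp: w1_def w2_def w3_def delta_sym[of \<alpha> q p] delta_sym[of \<alpha> r p] delta_sym[of \<alpha> r q])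
next
  case MaxSumMin
  show ?thesis unfolding MaxSumMin using ws d by (elim insertE emptyE; simp only: obj_MaxSumMin; auto simp: w1_def w2_def w3_def delta_sym[of \<alpha> q p] delta_sym[of \<alpha> r p] delta_sym[of \<alpha> r q] min_def)
next
  case MaxMinSum
  show ?thesis unfolding MaxMinSum using ws d by (elim insertE emptyE; simp only: obj_MaxMinSum; auto simp: w1_def w2_def w3_def delta_sym[of \<alpha> q p] delta_sym[of \<alpha> r p] delta_sym[of \<alpha> r q] min_def)
next
  case MaxSumNeighbor
  then show ?thesis using ws o by (auto simp: w1_def w2_def w3_def lessThan_Suc)
qed

lemma dmono:
  assumes "fst p \<le> fst q" "fst q \<le> fst r" "snd r \<le> snd q" "snd q \<le> snd p" "0 \<le> \<alpha>"
  shows "delta \<alpha> p q \<le> delta \<alpha> p r \<and> delta \<alpha> q r \<le> delta \<alpha> p r"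
proof -
  have a1: "(fst p - fst q)^2 \<le> (fst p - fst r)^2"
    using assms by (simp add: power2_commute[of "fst p"] power_mono)
  have a2: "(snd p - snd q)^2 \<le> (snd p - snd r)^2"
    using assms by (simp add: power_mono)
  have b1: "(fst q - fst r)^2 \<le> (fst p - fst r)^2"
    using assms by (simp add: power2_commute[of _ "fst r"] power_mono)
  have b2: "(snd q - snd r)^2 \<le> (snd p - snd r)^2"
    using assms by (simp add: power_mono)
  have "edist p q \<le> edist p r" unfolding edist_def using a1 a2 by simp
  moreover have "edist q r \<le> edist p r" unfolding edist_def using b1 b2 by simp
  ultimately show ?thesis unfolding delta_def using assms(5)
    by (auto intro!: powr_mono2 simp: edist_def)
qed

lemma w_nonneg: "0 \<le> w1 v" "0 \<le> w2 v" "0 \<le> w3 v"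
  by (cases v; simp add: w1_def w2_def w3_def)+

lemma T_mono:
  assumes "d1 \<le> e1" "d2 \<le> e2" "d3 \<le> e3"
  shows "w1 v * min d1 d2 + w2 v * (d1 + d2) + w3 v * d3 \<le> w1 v * min e1 e2 + w2 v * (e1 + e2) + w3 v * e3"
proof -
  have "w1 v * min d1 d2 \<le> w1 v * min e1 e2"
    using assms w_nonneg(1)[of v] by (intro mult_left_mono) auto
  moreover have "w2 v * (d1 + d2) \<le> w2 v * (e1 + e2)"
    using assms w_nonneg(2)[of v] by (intro mult_left_mono) auto
  moreover have "w3 v * d3 \<le> w3 v * e3"
    using assms w_nonneg(3)[of v] by (intro mult_left_mono) auto
  ultimately show ?thesis by linarith
qed

lemma sort3:
  fixes f :: "'a \<Rightarrow> real"
  assumes "f x \<noteq> f y" "f y \<noteq> f z" "f x \<noteq> f z"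
  obtains p q r where "f p < f q" "f q < f r" "p \<in> {x,y,z}" "q \<in> {x,y,z}" "r \<in> {x,y,z}"
    "[x,y,z] \<in> {[p,q,r],[p,r,q],[q,p,r],[q,r,p],[r,p,q],[r,q,p]}"
proof -
  consider "f x < f y" "f y < f z" | "f x < f z" "f z < f y" | "f y < f x" "f x < f z"
    | "f y < f z" "f z < f x" | "f z < f x" "f x < f y" | "f z < f y" "f y < f x"
    using assms by argo
  then show ?thesis
  proof cases
    case 1 then show ?thesis using that[of x y z] by auto
  next
    case 2 then show ?thesis using that[of x z y] by auto
  next
    case 3 then show ?thesis using that[of y x z] by auto
  next
    case 4 then show ?thesis using that[of y z x] by auto
  next
    case 5 then show ?thesis using that[of z x y] by auto
  next
    case 6 then show ?thesis using that[of z y x] by auto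
  qed
qed

lemma final_math:
  assumes alpha: "\<alpha> > 0"
    and n3: "3 \<le> length E"
    and H: "\<forall>i j. i < length E \<and> j < length E \<and> i \<noteq> j \<longrightarrow> incomp (E!i) (E!j)"
    and a: "a < length E" and b: "b < length E" and j: "j < length E" "j \<noteq> a" "j \<noteq> b"
    and ext: "\<forall>t<length E. X E a \<le> X E t \<and> X E t \<le> X E b"
    and opt: "\<forall>t<length E. t \<noteq> a \<and> t \<noteq> b \<longrightarrow> scr \<alpha> E v a b t \<le> scr \<alpha> E v a b j"
  shows "solves_3disp \<alpha> v E [a, j, b]"
proof -
  let ?n = "length E"
  have stair: "snd (E!u) \<le> snd (E!t)" if "t < ?n" "u < ?n" "fst (E!t) \<le> fst (E!u)" for t u
  proof (cases "t = u")
    case False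
    then have "incomp (E!t) (E!u)" using H that by blast
    then show ?thesis using that unfolding incomp_def prec_def by auto
  qed simp
  have fsteq: "t = u" if "t < ?n" "u < ?n" "fst (E!t) = fst (E!u)" for t u
  proof (rule ccontr)
    assume "t \<noteq> u"
    then have "incomp (E!t) (E!u)" using H that by blast
    then show False using that unfolding incomp_def prec_def by auto
  qed
  have ab: "a \<noteq> b"
  proof
    assume "a = b"
    have l: "(0::nat) < ?n" "(1::nat) < ?n" using n3 by auto
    have "X E a \<le> X E 0 \<and> X E 0 \<le> X E a" "X E a \<le> X E 1 \<and> X E 1 \<le> X E a"
      using ext l \<open>a = b\<close> by blast+
    then have "X E 0 = X E 1" by linarith
    then have "(0::nat) = 1" using fsteq[OF l] unfolding X_def by blast
    then show False by simp
  qed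
  have between: "fst (E!a) < fst (E!t) \<and> fst (E!t) < fst (E!b)" if "t < ?n" "t \<noteq> a" "t \<noteq> b" for t
  proof -
    have "X E a \<le> X E t" "X E t \<le> X E b" using ext that by auto
    moreover have "X E a \<noteq> X E t" using fsteq[of a t] that a unfolding X_def by auto
    moreover have "X E t \<noteq> X E b" using fsteq[of t b] that b unfolding X_def by auto
    ultimately show ?thesis unfolding X_def by linarith
  qed
  define A where "A = E!a"
  define B where "B = E!b"
  have dAB: "\<And>p q r. fst p \<le> fst q \<Longrightarrow> fst q \<le> fst r \<Longrightarrow> snd r \<le> snd q \<Longrightarrow> snd q \<le> snd p \<Longrightarrow>
      delta \<alpha> p q \<le> delta \<alpha> p r \<and> delta \<alpha> q r \<le> delta \<alpha> p r"
    using dmono alpha by simp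
  have jb: "fst A < fst (E!j)" "fst (E!j) < fst B" using between[OF j] unfolding A_def B_def by auto
  have js: "snd (E!j) \<le> snd A" "snd B \<le> snd (E!j)"
    using stair[of a j] stair[of j b] jb a b j unfolding A_def B_def by auto
  have out: "objective \<alpha> v [A, E!j, B] = scr \<alpha> E v a b j + w3 v * delta \<alpha> A B"
    apply (subst obj_perm[of A "E!j" B])
    using jb js dAB[of A "E!j" B] unfolding scr_def A_def B_def by auto
  show ?thesis
    unfolding solves_3disp_def
  proof (intro conjI allI impI)
    show "distinct [a, j, b]" using ab j by auto
    show "\<forall>i\<in>set [a, j, b]. i < ?n" using a b j by auto
    fix ws assume f: "feasible 3 E ws"
    then obtain x y z where ws: "ws = [x,y,z]"
      unfolding feasible_def by (auto simp: numeral_3_eq_3 length_Suc_conv)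
    have inE: "x \<in> set E" "y \<in> set E" "z \<in> set E" and dis: "x \<noteq> y" "y \<noteq> z" "x \<noteq> z"
      using f unfolding feasible_def ws by auto
    have fd: "fst p \<noteq> fst q" if "p \<in> set E" "q \<in> set E" "p \<noteq> q" for p q
      using that fsteq by (metis in_set_conv_nth)
    obtain p q r where o: "fst p < fst q" "fst q < fst r" and pqr: "p \<in> {x,y,z}" "q \<in> {x,y,z}" "r \<in> {x,y,z}"
      and perm: "[x,y,z] \<in> {[p,q,r],[p,r,q],[q,p,r],[q,r,p],[r,p,q],[r,q,p]}"
      by (rule sort3[of fst x y z, OF fd[OF inE(1) inE(2) dis(1)] fd[OF inE(2) inE(3) dis(2)] fd[OF inE(1) inE(3) dis(3)]])
    have "p \<in> set E" "q \<in> set E" "r \<in> set E" using pqr inE by auto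
    then obtain tp tq tr where t: "tp < ?n" "tq < ?n" "tr < ?n" "p = E!tp" "q = E!tq" "r = E!tr"
      by (metis in_set_conv_nth)
    have ap: "fst A \<le> fst p" "fst r \<le> fst B" using ext t unfolding X_def A_def B_def by auto
    have tq: "tq \<noteq> a" "tq \<noteq> b"
      using ap o t unfolding A_def B_def by auto
    have sA: "snd p \<le> snd A" "snd q \<le> snd p" "snd r \<le> snd q" "snd B \<le> snd r"
      using stair[of a tp] stair[of tp tq] stair[of tq tr] stair[of tr b] ap o t a b
      unfolding A_def B_def by auto
    have d1: "delta \<alpha> p q \<le> delta \<alpha> p r" "delta \<alpha> q r \<le> delta \<alpha> p r"
      using dAB[of p q r] o sA by auto
    have "objective \<alpha> v ws = w1 v * min (delta \<alpha> p q) (delta \<alpha> q r) + w2 v * (delta \<alpha> p q + delta \<alpha> q r)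
           + w3 v * delta \<alpha> p r"
      unfolding ws by (rule obj_perm[OF o d1 perm])
    also have "\<dots> \<le> w1 v * min (delta \<alpha> A q) (delta \<alpha> q B) + w2 v * (delta \<alpha> A q + delta \<alpha> q B)
           + w3 v * delta \<alpha> A B"
    proof (rule T_mono)
      show "delta \<alpha> p q \<le> delta \<alpha> A q" using dAB[of A p q] ap o sA by auto
      show "delta \<alpha> q r \<le> delta \<alpha> q B" using dAB[of q r B] ap o sA by auto
      have "delta \<alpha> p r \<le> delta \<alpha> A r" using dAB[of A p r] ap o sA by auto
      also have "\<dots> \<le> delta \<alpha> A B" using dAB[of A r B] ap o sA by auto
      finally show "delta \<alpha> p r \<le> delta \<alpha> A B" .
    qed
    also have "\<dots> = scr \<alpha> E v a b tq + w3 v * delta \<alpha> A B"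
      unfolding scr_def A_def B_def t by simp
    also have "\<dots> \<le> scr \<alpha> E v a b j + w3 v * delta \<alpha> A B"
      using opt t tq by auto
    also have "\<dots> = objective \<alpha> v (map ((!) E) [a, j, b])"
      using out unfolding A_def B_def by simp
    finally show "objective \<alpha> v ws \<le> objective \<alpha> v (map ((!) E) [a, j, b])" .
  qed
qed


theorem proposition6:
  fixes \<alpha> :: real
  assumes "\<alpha> > 0"
  shows "\<forall>v :: variant. \<exists>(prog :: instr list) (c :: nat).
     \<forall>E :: pt list.
       length E \<ge> 3 \<and>
       (\<forall>i j. i < length E \<and> j < length E \<and> i \<noteq> j \<longrightarrow> incomp (E!i) (E!j))
       \<longrightarrow> (\<exists>k \<le> c * length E.
              halted prog (run \<alpha> E prog k) \<and>
              solves_3disp \<alpha> v E (out_idx (run \<alpha> E prog k)))"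
proof
  fix v :: variant
  show "\<exists>(prog :: instr list) (c :: nat).
     \<forall>E :: pt list.
       length E \<ge> 3 \<and>
       (\<forall>i j. i < length E \<and> j < length E \<and> i \<noteq> j \<longrightarrow> incomp (E!i) (E!j))
       \<longrightarrow> (\<exists>k \<le> c * length E.
              halted prog (run \<alpha> E prog k) \<and>
              solves_3disp \<alpha> v E (out_idx (run \<alpha> E prog k)))"
  proof (rule exI[of _ "prg v"], rule exI[of _ 40], intro allI impI)
    fix E :: "pt list"
    assume h: "length E \<ge> 3 \<and>
       (\<forall>i j. i < length E \<and> j < length E \<and> i \<noteq> j \<longrightarrow> incomp (E!i) (E!j))"
    obtain k where k: "k \<le> 40 * length E" "Fin \<alpha> E v (run \<alpha> E (prg v) k)"
      using total[of E \<alpha> v] h by blast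
    obtain pc r m where s: "run \<alpha> E (prg v) k = (pc, r, m)" by (cases "run \<alpha> E (prg v) k")
    have F: "m 0 < length E" "m 2 < length E"
     "\<forall>t<length E. X E (m 0) \<le> X E t \<and> X E t \<le> X E (m 2)"
     "m 1 < length E" "m 1 \<noteq> m 0" "m 1 \<noteq> m 2"
     "\<forall>j<length E. j \<noteq> m 0 \<and> j \<noteq> m 2 \<longrightarrow> scr \<alpha> E v (m 0) (m 2) j \<le> scr \<alpha> E v (m 0) (m 2) (m 1)"
      using k(2) by (simp_all add: s Fin_def)
    have sol: "solves_3disp \<alpha> v E [m 0, m 1, m 2]"
      by (rule final_math[OF assms _ _ F(1) F(2) F(4) F(5) F(6) F(3) F(7)]) (use h in auto)
    show "\<exists>k\<le>40 * length E. halted (prg v) (run \<alpha> E (prg v) k) \<and>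
              solves_3disp \<alpha> v E (out_idx (run \<alpha> E (prg v) k))"
      using k Fin_halted[OF k(2)] sol by (auto simp: s out_idx_def)
  qed
qed

end
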